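(* Fix an integer $m\ge1$ and a real $\bar c>m$. For $n\in\mathbb{N}$ define $H_2(n)=\max\{M\in\mathbb{N}_0:\lfloor (m+M)^2/4\rfloor\le mn\}$, $H_3(n)=\lfloor\sqrt{n\bar c+1}\rfloor$, $H_4(n)=\lfloor\sqrt{\tfrac14+n\bar c}-\tfrac12\rfloor$, $H_5(n)=\min\big(\lfloor n(\bar c-m)/k_5+m\rfloor,\,n\big)$, where $k_5=\lceil m+\sqrt{m^2+n(\bar c-2m)}\rceil$ if $m^2+n(\bar c-2m)\ge0$ and $k_5=1$ otherwise, and $H_6(n)=\min\big(\lfloor n(\bar c-m)/k_6+m\rfloor,\,n-1\big)$, where $k_6=\lceil m+1+\sqrt{(m+1)^2+n(\bar c-2m)}\rceil$ if $(m+1)^2+n(\bar c-2m)\ge0$ and $k_6=1$ otherwise. Then for every $q\in\{5,6\}$ and $p\in\{2,3,4\}$, $\liminf_{n\to\infty} H_q(n)/H_p(n)\ge1$.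
   Context: These functions are the upper bounds on the maximum degree under which various sufficient conditions guarantee graphicality (with loops) of a bidegree sequence with $n$ entries, minimum degree $m$ and average degree $\bar c$; the claim is purely about the displayed functions. *)

theory Defs
  imports Complex_Main "HOL-Library.Liminf_Limsup" "HOL-Library.Extended_Real"
begin

text \<open>Parameters: m (minimum degree, a positive integer), c (average degree, real), n (length).\<close>

definition H2 :: "nat \<Rightarrow> real \<Rightarrow> nat \<Rightarrow> int" where
  "H2 m c n = int (Max {M::nat. (m + M)^2 div 4 \<le> m * n})"

definition H3 :: "nat \<Rightarrow> real \<Rightarrow> nat \<Rightarrow> int" where
  "H3 m c n = \<lfloor>sqrt (real n * c + 1)\<rfloor>"

definition H4 :: "nat \<Rightarrow> real \<Rightarrow> nat \<Rightarrow> int" where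
  "H4 m c n = \<lfloor>sqrt (1/4 + real n * c) - 1/2\<rfloor>"

definition k5 :: "nat \<Rightarrow> real \<Rightarrow> nat \<Rightarrow> int" where
  "k5 m c n = (if real m ^ 2 + real n * (c - 2 * real m) \<ge> 0
     then \<lceil>real m + sqrt (real m ^ 2 + real n * (c - 2 * real m))\<rceil> else 1)"

definition H5 :: "nat \<Rightarrow> real \<Rightarrow> nat \<Rightarrow> int" where
  "H5 m c n = min \<lfloor>real n * (c - real m) / real_of_int (k5 m c n) + real m\<rfloor> (int n)"

definition k6 :: "nat \<Rightarrow> real \<Rightarrow> nat \<Rightarrow> int" where
  "k6 m c n = (if (real m + 1) ^ 2 + real n * (c - 2 * real m) \<ge> 0
     then \<lceil>real m + 1 + sqrt ((real m + 1) ^ 2 + real n * (c - 2 * real m))\<rceil> else 1)"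

definition H6 :: "nat \<Rightarrow> real \<Rightarrow> nat \<Rightarrow> int" where
  "H6 m c n = min \<lfloor>real n * (c - real m) / real_of_int (k6 m c n) + real m\<rfloor> (int n - 1)"

definition H :: "nat \<Rightarrow> nat \<Rightarrow> real \<Rightarrow> nat \<Rightarrow> int" where
  "H q m c n = (if q = 2 then H2 m c n else if q = 3 then H3 m c n else if q = 4 then H4 m c n
      else if q = 5 then H5 m c n else H6 m c n)"

end

theory Submission imports Defs "HOL-Real_Asymp.Real_Asymp" begin

lemma G1:
  fixes Q P :: "nat \<Rightarrow> int" and a b :: "nat \<Rightarrow> real"
  assumes "eventually (\<lambda>n. a n \<le> real_of_int (Q n)) sequentially"
    and "eventually (\<lambda>n. 0 < real_of_int (P n) \<and> real_of_int (P n) \<le> b n) sequentially"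
    and "((\<lambda>n. a n / b n) \<longlongrightarrow> L) sequentially" and "L \<ge> 1"
  shows "Liminf sequentially (\<lambda>n. ereal (real_of_int (Q n) / real_of_int (P n))) \<ge> 1"
proof -
  have "eventually (\<lambda>n. a n / b n > 0) sequentially"
    using assms(3,4) by (intro order_tendstoD) auto
  with assms(1,2) have ev: "eventually (\<lambda>n. ereal (a n / b n) \<le> ereal (real_of_int (Q n) / real_of_int (P n))) sequentially"
  proof eventually_elim
    case (elim n)
    then have bp: "b n > 0" by linarith
    with elim have an: "a n > 0" by (simp add: zero_less_divide_iff)
    have "a n / b n \<le> a n / real_of_int (P n)"
      using elim an by (intro divide_left_mono) auto
    also have "\<dots> \<le> real_of_int (Q n) / real_of_int (P n)"
      using elim by (intro divide_right_mono) auto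
    finally show ?case by simp
  qed
  have "Liminf sequentially (\<lambda>n. ereal (a n / b n)) = ereal L"
    using assms(3) by (intro lim_imp_Liminf) auto
  then have A: "ereal L \<le> Liminf sequentially (\<lambda>n. ereal (real_of_int (Q n) / real_of_int (P n)))"
    using Liminf_mono[OF ev] by simp
  have B: "(1::ereal) \<le> ereal L" using assms(4) by (simp add: one_ereal_def)
  show ?thesis by (rule order_trans[OF B A])
qed

lemma G2:
  fixes Q P :: "nat \<Rightarrow> int" and a b :: "nat \<Rightarrow> real"
  assumes "eventually (\<lambda>n. a n \<le> real_of_int (Q n)) sequentially"
    and "eventually (\<lambda>n. 0 < real_of_int (P n) \<and> real_of_int (P n) \<le> b n) sequentially"
    and "eventually (\<lambda>n. 1 \<le> a n / b n) sequentially"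
  shows "Liminf sequentially (\<lambda>n. ereal (real_of_int (Q n) / real_of_int (P n))) \<ge> 1"
proof -
  from assms have "eventually (\<lambda>n. ereal 1 \<le> ereal (real_of_int (Q n) / real_of_int (P n))) sequentially"
  proof eventually_elim
    case (elim n)
    then have "b n > 0" by linarith
    with elim have "b n \<le> a n" by (simp add: le_divide_eq)
    with elim show ?case by (simp add: le_divide_eq)
  qed
  from Liminf_bounded[OF this] show ?thesis by (simp add: one_ereal_def)
qed

lemma div4: "(x::nat) div 4 \<le> k \<Longrightarrow> x \<le> 4 * k + 3" by presburger

lemma H2_bounds:
  assumes "m \<ge> 1" "n \<ge> m + 1"
  shows "1 \<le> H2 m c n \<and> real_of_int (H2 m c n) \<le> sqrt (real n * (4 * real m) + 3)"
proof -
  define S where "S = {M::nat. (m + M)^2 div 4 \<le> m * n}"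
  have sub: "S \<subseteq> {..m*n}"
  proof
    fix M assume "M \<in> S"
    have "4 * M \<le> (m + M)^2"
    proof -
      have "4 * M \<le> (1 + M)^2" by (induction M) (auto simp: power2_eq_square)
      also have "\<dots> \<le> (m + M)^2" using assms by (intro power_mono) auto
      finally show ?thesis .
    qed
    then have "M \<le> (m + M)^2 div 4" by linarith
    with \<open>M \<in> S\<close> show "M \<in> {..m*n}" unfolding S_def by auto
  qed
  then have fin: "finite S" by (rule finite_subset) auto
  have "(m + 1)^2 \<le> 4 * (m * n)"
  proof -
    have "(m+1)^2 = (m+1)*(m+1)" by (simp add: power2_eq_square)
    also have "\<dots> \<le> (4*m) * n" using assms by (intro mult_mono) auto
    finally show ?thesis by simp
  qed
  then have "(m + 1)^2 div 4 \<le> (4 * (m * n)) div 4" by (rule div_le_mono)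
  then have "1 \<in> S" unfolding S_def by simp
  have "1 \<le> Max S" by (rule Max_ge[OF fin \<open>1 \<in> S\<close>])
  moreover have "Max S \<in> S" using fin \<open>1 \<in> S\<close> by (intro Max_in) auto
  then have "(m + Max S)^2 div 4 \<le> m * n" unfolding S_def by simp
  then have "(m + Max S)^2 \<le> 4 * m * n + 3" using div4 by simp
  then have "(Max S)^2 \<le> 4 * m * n + 3"
    by (meson le_add2 order_trans power_mono zero_le)
  then have "real ((Max S)^2) \<le> real (4 * m * n + 3)" by linarith
  then have "real (Max S) ^ 2 \<le> 4 * real m * real n + 3" by simp
  then have r: "real (Max S) \<le> sqrt (4 * real m * real n + 3)" by (simp add: real_le_rsqrt)
  have eq: "4 * real m * real n + 3 = real n * (4 * real m) + 3" by simp
  from r have r2: "real (Max S) \<le> sqrt (real n * (4 * real m) + 3)" by (simp only: eq)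
  have h: "H2 m c n = int (Max S)" unfolding H2_def S_def by simp
  show ?thesis using r2 \<open>1 \<le> Max S\<close> unfolding h by (intro conjI) simp_all
qed

lemma H3_bounds:
  assumes "c > 0"
  shows "1 \<le> H3 m c n \<and> real_of_int (H3 m c n) \<le> sqrt (real n * c + 1)"
proof -
  have "1 \<le> sqrt (real n * c + 1)" using assms by simp
  then show ?thesis unfolding H3_def by (simp add: le_floor_iff)
qed

lemma H4_bounds:
  assumes "c > 1" "n \<ge> 2"
  shows "1 \<le> H4 m c n \<and> real_of_int (H4 m c n) \<le> sqrt (real n * c + 1/4)"
proof -
  have "2 * 1 \<le> real n * c" using assms by (intro mult_mono) auto
  then have "real n * c \<ge> 2" by linarith
  then have "9/4 \<le> 1/4 + real n * c" by linarith
  then have "sqrt (9/4) \<le> sqrt (1/4 + real n * c)" by (rule real_sqrt_le_mono)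
  moreover have "sqrt (9/4::real) = 3/2" by (simp add: real_sqrt_divide)
  ultimately have "1 \<le> sqrt (1/4 + real n * c) - 1/2" by simp
  moreover have "real_of_int \<lfloor>sqrt (1/4 + real n * c) - 1/2\<rfloor> \<le> sqrt (1/4 + real n * c) - 1/2" by (rule of_int_floor_le)
  ultimately have f1: "1 \<le> H4 m c n" and f2: "real_of_int (H4 m c n) \<le> sqrt (1/4 + real n * c)"
    unfolding H4_def by (simp add: le_floor_iff, linarith)
  have eq: "1/4 + real n * c = real n * c + 1/4" by simp
  from f2 have f3: "real_of_int (H4 m c n) \<le> sqrt (real n * c + 1/4)" by (simp only: eq)
  show ?thesis using f1 f3 by blast
qed


lemma min_div1: "(b::real) > 0 \<Longrightarrow> 1 \<le> A / b \<Longrightarrow> 1 \<le> N / b \<Longrightarrow> 1 \<le> min A N / b"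
  by (simp add: le_divide_eq)

lemma H5_low:
  assumes "c > real m" "0 < real_of_int (k5 m c n)" "real_of_int (k5 m c n) \<le> K"
  shows "min (real n * (c - real m) / K + real m - 1) (real n) \<le> real_of_int (H5 m c n)"
proof -
  have "real n * (c - real m) / K \<le> real n * (c - real m) / real_of_int (k5 m c n)"
    using assms by (intro divide_left_mono) auto
  moreover have "real n * (c - real m) / real_of_int (k5 m c n) + real m - 1
     \<le> real_of_int \<lfloor>real n * (c - real m) / real_of_int (k5 m c n) + real m\<rfloor>"
    using real_of_int_floor_add_one_gt[of "real n * (c - real m) / real_of_int (k5 m c n) + real m"] by linarith
  ultimately show ?thesis unfolding H5_def by (simp add: min_le_iff_disj) linarith
qed

lemma H6_low:
  assumes "c > real m" "0 < real_of_int (k6 m c n)" "real_of_int (k6 m c n) \<le> K"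
  shows "min (real n * (c - real m) / K + real m - 1) (real n - 1) \<le> real_of_int (H6 m c n)"
proof -
  have "real n * (c - real m) / K \<le> real n * (c - real m) / real_of_int (k6 m c n)"
    using assms by (intro divide_left_mono) auto
  moreover have "real n * (c - real m) / real_of_int (k6 m c n) + real m - 1
     \<le> real_of_int \<lfloor>real n * (c - real m) / real_of_int (k6 m c n) + real m\<rfloor>"
    using real_of_int_floor_add_one_gt[of "real n * (c - real m) / real_of_int (k6 m c n) + real m"] by linarith
  ultimately show ?thesis unfolding H6_def by (simp add: min_le_iff_disj) linarith
qed

lemma k5_big:
  assumes "c > 2 * real m" "m \<ge> 1"
  shows "0 < real_of_int (k5 m c n) \<and> real_of_int (k5 m c n) \<le> real m + 1 + sqrt (real m ^ 2 + real n * (c - 2 * real m))"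
proof -
  have "real n * (c - 2 * real m) \<ge> 0" using assms by simp
  then have D: "real m ^ 2 + real n * (c - 2 * real m) \<ge> 0" by simp
  let ?x = "real m + sqrt (real m ^ 2 + real n * (c - 2 * real m))"
  have "?x \<le> real_of_int \<lceil>?x\<rceil>" by (rule le_of_int_ceiling)
  moreover have "?x \<ge> 1" using assms real_sqrt_ge_zero[OF D] of_nat_le_iff[of 1 m] by linarith
  moreover have "real_of_int \<lceil>?x\<rceil> \<le> ?x + 1" by (rule of_int_ceiling_le_add_one)
  moreover have e: "k5 m c n = \<lceil>?x\<rceil>" unfolding k5_def using D by simp
  ultimately show ?thesis unfolding e by (intro conjI; linarith)
qed

lemma k6_big:
  assumes "c > 2 * real m" "m \<ge> 1"
  shows "0 < real_of_int (k6 m c n) \<and> real_of_int (k6 m c n) \<le> real m + 2 + sqrt ((real m + 1) ^ 2 + real n * (c - 2 * real m))"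
proof -
  have "real n * (c - 2 * real m) \<ge> 0" using assms by simp
  then have D: "(real m + 1) ^ 2 + real n * (c - 2 * real m) \<ge> 0" by (simp add: add_nonneg_nonneg)
  let ?x = "real m + 1 + sqrt ((real m + 1) ^ 2 + real n * (c - 2 * real m))"
  have "?x \<le> real_of_int \<lceil>?x\<rceil>" by (rule le_of_int_ceiling)
  moreover have "?x \<ge> 1" using assms real_sqrt_ge_zero[OF D] of_nat_le_iff[of 1 m] by linarith
  moreover have "real_of_int \<lceil>?x\<rceil> \<le> ?x + 1" by (rule of_int_ceiling_le_add_one)
  moreover have e: "k6 m c n = \<lceil>?x\<rceil>" unfolding k6_def using D by simp
  ultimately show ?thesis unfolding e by (intro conjI; linarith)
qed

lemma k5_small:
  assumes "c \<le> 2 * real m" "m \<ge> 1" "c < 2 * real m \<longrightarrow> real m ^ 2 + real n * (c - 2 * real m) < 0"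
  shows "0 < real_of_int (k5 m c n) \<and> real_of_int (k5 m c n) \<le> 2 * real m + 1"
proof (cases "c = 2 * real m")
  case True
  then have "k5 m c n = \<lceil>2 * real m\<rceil>" unfolding k5_def by simp
  also have "\<dots> = 2 * int m" by (metis ceiling_of_int of_int_mult of_int_numeral of_int_of_nat_eq)
  finally show ?thesis using assms by simp
next
  case False
  then show ?thesis using assms unfolding k5_def by auto
qed

lemma k6_small:
  assumes "c \<le> 2 * real m" "m \<ge> 1" "c < 2 * real m \<longrightarrow> (real m + 1) ^ 2 + real n * (c - 2 * real m) < 0"
  shows "0 < real_of_int (k6 m c n) \<and> real_of_int (k6 m c n) \<le> 2 * real m + 3"
proof (cases "c = 2 * real m")
  case True
  then have "k6 m c n = \<lceil>real m + 1 + sqrt ((real m + 1)^2)\<rceil>" unfolding k6_def by simp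
  also have "real m + 1 + sqrt ((real m + 1)^2) = real_of_int (2 * int m + 2)" by simp
  also have "\<lceil>real_of_int (2 * int m + 2)\<rceil> = 2 * int m + 2" by (rule ceiling_of_int)
  finally show ?thesis using assms by simp
next
  case False
  then show ?thesis using assms unfolding k6_def by auto
qed

lemma Lge1:
  fixes m c :: real assumes "m \<ge> 1" "c > 2*m"
  shows "(c-m)/(sqrt(c-2*m)*sqrt(4*m)) \<ge> 1" "(c-m)/(sqrt(c-2*m)*sqrt c) \<ge> 1"
proof -
  have e: "(c-m)^2 - (c-2*m)*(4*m) = (c - 3*m)^2" by (simp add: power2_eq_square algebra_simps)
  have "0 \<le> (c - 3*m)^2" by (rule zero_le_power2)
  with e have "(c-2*m)*(4*m) \<le> (c-m)^2" by linarith
  then have "sqrt((c-2*m)*(4*m)) \<le> c - m" using assms by (intro real_le_lsqrt) auto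
  then have s: "sqrt(c-2*m)*sqrt(4*m) \<le> c - m" by (simp only: real_sqrt_mult)
  have p: "sqrt(c-2*m)*sqrt(4*m) > 0" using assms by simp
  from s p show "(c-m)/(sqrt(c-2*m)*sqrt(4*m)) \<ge> 1" by (simp only: le_divide_eq_1_pos)
next
  have e: "(c-m)^2 - (c-2*m)*c = m^2" by (simp add: power2_eq_square algebra_simps)
  have "0 \<le> m^2" by (rule zero_le_power2)
  with e have "(c-2*m)*c \<le> (c-m)^2" by linarith
  then have "sqrt((c-2*m)*c) \<le> c - m" using assms by (intro real_le_lsqrt) auto
  then have s: "sqrt(c-2*m)*sqrt c \<le> c - m" by (simp only: real_sqrt_mult)
  have p: "sqrt(c-2*m)*sqrt c > 0" using assms by simp
  from s p show "(c-m)/(sqrt(c-2*m)*sqrt c) \<ge> 1" by (simp only: le_divide_eq_1_pos)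
qed


lemma gen_lim0:
  fixes a u v w d \<beta> \<gamma> :: real assumes "a > 0" "d > 0" "\<beta> > 0"
  shows "((\<lambda>n::nat. (real n * a / (u + sqrt (v + real n * d)) + w - 1) / sqrt (real n * \<beta> + \<gamma>)) \<longlongrightarrow> a * inverse (d powr (1/2)) * inverse (\<beta> powr (1/2))) sequentially"
  using assms by real_asymp

lemma gen_lim:
  fixes a u v w d \<beta> \<gamma> :: real assumes "a > 0" "d > 0" "\<beta> > 0"
  shows "((\<lambda>n::nat. (real n * a / (u + sqrt (v + real n * d)) + w - 1) / sqrt (real n * \<beta> + \<gamma>)) \<longlongrightarrow> a / (sqrt d * sqrt \<beta>)) sequentially"
proof -
  have h1: "d powr (1/2) = sqrt d" using assms(2) by (intro powr_half_sqrt) simp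
  have h2: "\<beta> powr (1/2) = sqrt \<beta>" using assms(3) by (intro powr_half_sqrt) simp
  have "a * inverse (d powr (1/2)) * inverse (\<beta> powr (1/2)) = a / (sqrt d * sqrt \<beta>)"
    unfolding h1 h2 by (simp only: divide_inverse inverse_mult_distrib mult.assoc)
  with gen_lim0[OF assms, of u v w \<gamma>] show ?thesis by simp
qed

lemma gen_le:
  fixes a u v w d :: real assumes "a > 0" "d > 0"
  shows "eventually (\<lambda>n::nat. real n * a / (u + sqrt (v + real n * d)) + w - 1 \<le> real n - 1) sequentially"
  using assms by real_asymp
lemma gen_s1:
  fixes \<alpha> \<beta> \<gamma> :: real assumes "\<alpha> > 0" "\<beta> > 0"
  shows "eventually (\<lambda>n::nat. 1 \<le> real n * \<alpha> / sqrt (real n * \<beta> + \<gamma>)) sequentially"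
  using assms by real_asymp
lemma gen_s2:
  fixes \<beta> \<gamma> :: real assumes "\<beta> > 0"
  shows "eventually (\<lambda>n::nat. 1 \<le> (real n - 1) / sqrt (real n * \<beta> + \<gamma>)) sequentially"
  using assms by real_asymp
lemma gen_neg:
  fixes v d :: real assumes "d < 0"
  shows "eventually (\<lambda>n::nat. v + real n * d < 0) sequentially"
  using assms by real_asymp

theorem corollary4:
  fixes m :: nat and c :: real
  assumes "m \<ge> 1" and "c > real m"
  shows "\<forall>q\<in>{5,6}. \<forall>p\<in>{2,3,4}.
    Liminf sequentially (\<lambda>n. ereal (real_of_int (H q m c n) / real_of_int (H p m c n))) \<ge> 1"
proof -
  have m1: "real m \<ge> 1" using assms(1) by simp
  have c1: "c > 1" using assms m1 by linarith
  have cm: "c - real m > 0" using assms by simp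
  have b2: "4 * real m > 0" using m1 by simp
  have b3: "c > 0" using c1 by simp
  have B2: "eventually (\<lambda>n. 0 < real_of_int (H2 m c n) \<and> real_of_int (H2 m c n) \<le> sqrt (real n * (4 * real m) + 3)) sequentially"
    using eventually_ge_at_top[of "m+1"]
  proof eventually_elim
    case (elim n) then show ?case using H2_bounds[OF assms(1) elim, of c] by linarith
  qed
  have B3: "eventually (\<lambda>n. 0 < real_of_int (H3 m c n) \<and> real_of_int (H3 m c n) \<le> sqrt (real n * c + 1)) sequentially"
  proof (rule always_eventually, rule allI)
    fix n show "0 < real_of_int (H3 m c n) \<and> real_of_int (H3 m c n) \<le> sqrt (real n * c + 1)"
      using H3_bounds[of c m n] c1 by linarith
  qed
  have B4: "eventually (\<lambda>n. 0 < real_of_int (H4 m c n) \<and> real_of_int (H4 m c n) \<le> sqrt (real n * c + 1/4)) sequentially"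
    using eventually_ge_at_top[of 2]
  proof eventually_elim
    case (elim n) then show ?case using H4_bounds[OF c1 elim, of m] by linarith
  qed
  have R: "1 \<le> Liminf sequentially (\<lambda>n. ereal (real_of_int (H5 m c n) / real_of_int (H2 m c n))) \<and>
           1 \<le> Liminf sequentially (\<lambda>n. ereal (real_of_int (H5 m c n) / real_of_int (H3 m c n))) \<and>
           1 \<le> Liminf sequentially (\<lambda>n. ereal (real_of_int (H5 m c n) / real_of_int (H4 m c n))) \<and>
           1 \<le> Liminf sequentially (\<lambda>n. ereal (real_of_int (H6 m c n) / real_of_int (H2 m c n))) \<and>
           1 \<le> Liminf sequentially (\<lambda>n. ereal (real_of_int (H6 m c n) / real_of_int (H3 m c n))) \<and>
           1 \<le> Liminf sequentially (\<lambda>n. ereal (real_of_int (H6 m c n) / real_of_int (H4 m c n)))"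
  proof (cases "c > 2 * real m")
    case True
    have d: "c - 2 * real m > 0" using True by simp
    note LL = Lge1[OF m1 True]
    have A5: "eventually (\<lambda>n. real n * (c - real m) / (real m + 1 + sqrt (real m ^ 2 + real n * (c - 2 * real m))) + real m - 1 \<le> real_of_int (H5 m c n)) sequentially"
      using gen_le[OF cm d, of "real m + 1" "real m ^ 2" "real m"]
    proof eventually_elim
      case (elim n)
      have "min (real n * (c - real m) / (real m + 1 + sqrt (real m ^ 2 + real n * (c - 2 * real m))) + real m - 1) (real n) \<le> real_of_int (H5 m c n)"
        using k5_big[OF True assms(1), of n] assms(2) by (intro H5_low) auto
      with elim show ?case by linarith
    qed
    have A6: "eventually (\<lambda>n. real n * (c - real m) / (real m + 2 + sqrt ((real m + 1) ^ 2 + real n * (c - 2 * real m))) + real m - 1 \<le> real_of_int (H6 m c n)) sequentially"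
      using gen_le[OF cm d, of "real m + 2" "(real m + 1) ^ 2" "real m"]
    proof eventually_elim
      case (elim n)
      have "min (real n * (c - real m) / (real m + 2 + sqrt ((real m + 1) ^ 2 + real n * (c - 2 * real m))) + real m - 1) (real n - 1) \<le> real_of_int (H6 m c n)"
        using k6_big[OF True assms(1), of n] assms(2) by (intro H6_low) auto
      with elim show ?case by linarith
    qed
    note L = gen_lim[OF cm d]
    show ?thesis
      using G1[OF A5 B2 L[OF b2] LL(1)] G1[OF A5 B3 L[OF b3] LL(2)] G1[OF A5 B4 L[OF b3] LL(2)]
            G1[OF A6 B2 L[OF b2] LL(1)] G1[OF A6 B3 L[OF b3] LL(2)] G1[OF A6 B4 L[OF b3] LL(2)]
      by blast
  next
    case False
    have N: "eventually (\<lambda>n. c < 2 * real m \<longrightarrow> (real m + 1) ^ 2 + real n * (c - 2 * real m) < 0 \<and> real m ^ 2 + real n * (c - 2 * real m) < 0) sequentially"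
    proof (cases "c < 2 * real m")
      case True
      then have "c - 2 * real m < 0" by simp
      from eventually_conj[OF gen_neg[OF this, of "(real m + 1) ^ 2"] gen_neg[OF this, of "real m ^ 2"]]
      show ?thesis by (rule eventually_mono) simp
    qed simp
    define \<alpha>5 where "\<alpha>5 = (c - real m) / (2 * real m + 1)"
    define \<alpha>6 where "\<alpha>6 = (c - real m) / (2 * real m + 3)"
    have a5: "\<alpha>5 > 0" "\<alpha>6 > 0" unfolding \<alpha>5_def \<alpha>6_def using cm by simp_all
    have A5: "eventually (\<lambda>n. min (real n * \<alpha>5) (real n - 1) \<le> real_of_int (H5 m c n)) sequentially"
      using N
    proof eventually_elim
      case (elim n)
      have "min (real n * (c - real m) / (2 * real m + 1) + real m - 1) (real n) \<le> real_of_int (H5 m c n)"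
        using k5_small[of c m n] False assms elim by (intro H5_low) auto
      moreover have "real n * (c - real m) / (2 * real m + 1) = real n * \<alpha>5" unfolding \<alpha>5_def by simp
      ultimately show ?case using m1 by linarith
    qed
    have A6: "eventually (\<lambda>n. min (real n * \<alpha>6) (real n - 1) \<le> real_of_int (H6 m c n)) sequentially"
      using N
    proof eventually_elim
      case (elim n)
      have "min (real n * (c - real m) / (2 * real m + 3) + real m - 1) (real n - 1) \<le> real_of_int (H6 m c n)"
        using k6_small[of c m n] False assms elim by (intro H6_low) auto
      moreover have "real n * (c - real m) / (2 * real m + 3) = real n * \<alpha>6" unfolding \<alpha>6_def by simp
      ultimately show ?case using m1 by linarith
    qed
    have E: "eventually (\<lambda>n. 1 \<le> min (real n * \<alpha>) (real n - 1) / sqrt (real n * \<beta> + \<gamma>)) sequentially"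
      if "\<alpha> > 0" "\<beta> > 0" "\<gamma> > 0" for \<alpha> \<beta> \<gamma> :: real
      using gen_s1[OF that(1,2), of \<gamma>] gen_s2[OF that(2), of \<gamma>]
    proof eventually_elim
      case (elim n)
      have "sqrt (real n * \<beta> + \<gamma>) > 0" using that by (intro real_sqrt_gt_zero add_nonneg_pos) auto
      then show ?case using min_div1 elim by blast
    qed
    have g: "(3::real) > 0" "(1::real) > 0" "(1/4::real) > 0" by simp_all
    show ?thesis
      using G2[OF A5 B2 E[OF a5(1) b2 g(1)]] G2[OF A5 B3 E[OF a5(1) b3 g(2)]]
            G2[OF A5 B4 E[OF a5(1) b3 g(3)]]
            G2[OF A6 B2 E[OF a5(2) b2 g(1)]] G2[OF A6 B3 E[OF a5(2) b3 g(2)]]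
            G2[OF A6 B4 E[OF a5(2) b3 g(3)]]
      by blast
  qed
  then show ?thesis by (simp add: H_def)
qed

end
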